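(* For every $n\geq 2$, letting $P_n$ denote the path with $n$ edges (and $n+1$ vertices), ${\rm ML}^{\rm W}(P_n)=0$ if $n=2$; ${\rm ML}^{\rm W}(P_n)=1$ if $n=3$; ${\rm ML}^{\rm W}(P_n)=2$ if $n\in\{4,5\}$; and ${\rm ML}^{\rm W}(P_n)=2n-10$ otherwise.
   Context: A walk of a graph $G$ is a sequence of vertices $u_0u_1\dots u_p$ with $u_tu_{t+1}\in E(G)$ for all $t$ (vertices and edges may repeat); its length is $p$. For a walk $W$ of $G$, $G+W$ is the multigraph on $V(G)$ whose edge multiset consists of $E(G)$ together with each edge added as many times as $W$ traverses it. A multigraph is locally irregular if no two adjacent vertices have the same degree; a walk is irregularising if $G+W$ is locally irregular. ${\rm ML}^{\rm W}(G)$ denotes the minimum length of an irregularising walk of $G$, where the trivial walk consisting of a single vertex (length $0$) is allowed. *)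

theory Defs
  imports Main
begin

text \<open>Simple graphs: finite vertex set V and symmetric irreflexive adjacency E on V.
  A walk is a nonempty list of vertices u_0 ... u_p with consecutive vertices adjacent;
  its length is p = length - 1.\<close>

definition is_walk :: "'a set \<Rightarrow> ('a \<Rightarrow> 'a \<Rightarrow> bool) \<Rightarrow> 'a list \<Rightarrow> bool" where
  "is_walk V E w \<longleftrightarrow> w \<noteq> [] \<and> set w \<subseteq> V \<and>
     (\<forall>t. Suc t < length w \<longrightarrow> E (w ! t) (w ! Suc t))"

definition walk_length :: "'a list \<Rightarrow> nat" where
  "walk_length w = length w - 1"

definition deg :: "'a set \<Rightarrow> ('a \<Rightarrow> 'a \<Rightarrow> bool) \<Rightarrow> 'a \<Rightarrow> nat" where
  "deg V E v = card {u \<in> V. E v u}"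

text \<open>Number of traversals by the walk w of edges incident to v
  (each traversal of an edge uv adds one copy of uv in G+W).\<close>
definition walk_incidences :: "'a list \<Rightarrow> 'a \<Rightarrow> nat" where
  "walk_incidences w v = card {t. Suc t < length w \<and> (w ! t = v \<or> w ! Suc t = v)}"

definition deg_plus :: "'a set \<Rightarrow> ('a \<Rightarrow> 'a \<Rightarrow> bool) \<Rightarrow> 'a list \<Rightarrow> 'a \<Rightarrow> nat" where
  "deg_plus V E w v = deg V E v + walk_incidences w v"

text \<open>G+W is locally irregular (adjacency in G+W coincides with adjacency in G).\<close>
definition irregularising :: "'a set \<Rightarrow> ('a \<Rightarrow> 'a \<Rightarrow> bool) \<Rightarrow> 'a list \<Rightarrow> bool" where
  "irregularising V E w \<longleftrightarrow> is_walk V E w \<and>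
     (\<forall>u\<in>V. \<forall>v\<in>V. E u v \<longrightarrow> deg_plus V E w u \<noteq> deg_plus V E w v)"

definition min_irreg_walk_length :: "'a set \<Rightarrow> ('a \<Rightarrow> 'a \<Rightarrow> bool) \<Rightarrow> nat" where
  "min_irreg_walk_length V E = (LEAST p. \<exists>w. irregularising V E w \<and> walk_length w = p)"

definition path_V :: "nat \<Rightarrow> nat set" where
  "path_V n = {0..n}"

definition path_E :: "nat \<Rightarrow> nat \<Rightarrow> nat \<Rightarrow> bool" where
  "path_E n u v \<longleftrightarrow> u \<le> n \<and> v \<le> n \<and> (v = Suc u \<or> u = Suc v)"

end

theory Submission
  imports Defs
begin


abbreviation pw :: "nat list \<Rightarrow> bool" where
  "pw \<equiv> successively (\<lambda>a b. Suc a = b \<or> Suc b = a)"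

fun inc :: "nat list \<Rightarrow> nat \<Rightarrow> nat" where
  "inc (a#b#r) v = (if a = v \<or> b = v then 1 else 0) + inc (b#r) v"
| "inc _ v = 0"

fun tr :: "nat list \<Rightarrow> nat \<Rightarrow> nat" where
  "tr (a#b#r) i = (if (a = i \<and> Suc b = i) \<or> (b = i \<and> Suc a = i) then 1 else 0) + tr (b#r) i"
| "tr _ i = 0"

lemma card_less_Suc_split:
  "card {t. t < Suc N \<and> P t} = (if P 0 then 1 else 0) + card {t. t < N \<and> P (Suc t)}"
proof -
  have eq: "{t. t < Suc N \<and> P t} = (if P 0 then {0} else {}) \<union> Suc ` {t. t < N \<and> P (Suc t)}"
    by (auto simp: image_iff less_Suc_eq_0_disj)
  have "card (Suc ` {t. t < N \<and> P (Suc t)}) = card {t. t < N \<and> P (Suc t)}"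
    by (rule card_image) simp
  moreover have "finite (Suc ` {t. t < N \<and> P (Suc t)})" by simp
  ultimately show ?thesis unfolding eq by (auto simp: card_insert_if)
qed

lemma walk_inc_eq: "walk_incidences w v = inc w v"
proof (induction w v rule: inc.induct)
  case (1 a b r v)
  have "walk_incidences (a#b#r) v = card {t. t < Suc (length r) \<and> ((a#b#r) ! t = v \<or> (a#b#r) ! Suc t = v)}"
    unfolding walk_incidences_def by (simp add: Suc_less_eq)
  also have "\<dots> = (if a = v \<or> b = v then 1 else 0) + card {t. t < length r \<and> ((b#r) ! t = v \<or> (b#r) ! Suc t = v)}"
    by (subst card_less_Suc_split) simp
  also have "card {t. t < length r \<and> ((b#r) ! t = v \<or> (b#r) ! Suc t = v)} = walk_incidences (b#r) v"
    unfolding walk_incidences_def by (simp add: Suc_less_eq)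
  finally show ?case using 1 by simp
next
  case ("2_1" v) then show ?case by (simp add: walk_incidences_def)
next
  case ("2_2" a v) then show ?case by (simp add: walk_incidences_def)
qed

lemma inc_tr: "pw w \<Longrightarrow> inc w v = tr w v + tr w (Suc v)"
proof (induction w v rule: inc.induct)
  case (1 a b r v)
  then show ?case by auto
qed auto

lemma inc_count: "pw w \<Longrightarrow> w \<noteq> [] \<Longrightarrow>
   inc w v + (if hd w = v then 1 else 0) + (if last w = v then 1 else 0) = 2 * count_list w v"
  by (induction w v rule: inc.induct) (auto split: if_splits)

lemma inc_odd: "pw w \<Longrightarrow> w \<noteq> [] \<Longrightarrow> odd (inc w v) \<Longrightarrow> v = hd w \<or> v = last w"
  using inc_count[of w v] by (auto split: if_splits)

lemma tr_append: "xs \<noteq> [] \<Longrightarrow> tr (xs @ ys) i = tr xs i + tr (last xs # ys) i"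
  by (induction xs i rule: tr.induct) auto

lemma tr_0[simp]: "tr w 0 = 0"
  by (induction w "0::nat" rule: tr.induct) auto



lemma tr_sum: "pw w \<Longrightarrow> set w \<subseteq> {..n} \<Longrightarrow> (\<Sum>i=1..n. tr w i) = length w - 1"
proof (induction w rule: induct_list012)
  case (3 a b r)
  have ab: "Suc a = b \<or> Suc b = a" "a \<le> n" "b \<le> n" using 3(3,4) by auto
  have "(\<Sum>i=1..n. tr (a#b#r) i) = (\<Sum>i=1..n. (if i = max a b then 1 else 0)) + (\<Sum>i=1..n. tr (b#r) i)"
  proof -
    have "\<And>i. tr (a#b#r) i = (if i = max a b then 1 else 0) + tr (b#r) i"
      using ab(1) by (auto simp: max_def)
    then show ?thesis by (simp add: sum.distrib)
  qed
  also have "(\<Sum>i=1..n. (if i = max a b then 1 else 0::nat)) = 1"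
    using ab by (auto simp add: sum.delta max_def)
  finally show ?case using 3 by simp
qed auto

lemma tr_conn: "pw w \<Longrightarrow> tr w i = 0 \<Longrightarrow> 1 \<le> i \<Longrightarrow>
   (\<forall>x\<in>set w. x < i) \<or> (\<forall>x\<in>set w. i \<le> x)"
proof (induction w rule: induct_list012)
  case (3 a b r)
  then have "(\<forall>x\<in>set (b#r). x < i) \<or> (\<forall>x\<in>set (b#r). i \<le> x)" by auto
  moreover have "(b < i) = (a < i)" using 3(3,4) by (auto split: if_splits)
  ultimately show ?case by auto
qed auto

lemma tr_below: "\<forall>x\<in>set w. x < i \<Longrightarrow> i \<le> j \<Longrightarrow> tr w j = 0"
  by (induction w j rule: tr.induct) auto

lemma tr_above: "\<forall>x\<in>set w. i \<le> x \<Longrightarrow> j \<le> i \<Longrightarrow> tr w j = 0"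
  by (induction w j rule: tr.induct) auto

lemma succ_nth: "successively R w \<longleftrightarrow> (\<forall>t. Suc t < length w \<longrightarrow> R (w ! t) (w ! Suc t))"
proof (induction w rule: induct_list012)
  case (3 a b r)
  show ?case
  proof
    assume "successively R (a#b#r)"
    then show "\<forall>t. Suc t < length (a#b#r) \<longrightarrow> R ((a#b#r) ! t) ((a#b#r) ! Suc t)"
      using 3(2) by (auto simp: less_Suc_eq_0_disj)
  next
    assume H: "\<forall>t. Suc t < length (a#b#r) \<longrightarrow> R ((a#b#r) ! t) ((a#b#r) ! Suc t)"
    then have "R a b" by (metis length_Cons nth_Cons_0 nth_Cons_Suc zero_less_Suc Suc_less_eq)
    moreover have "\<forall>t. Suc t < length (b#r) \<longrightarrow> R ((b#r) ! t) ((b#r) ! Suc t)"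
      using H by (metis length_Cons nth_Cons_Suc Suc_less_eq)
    ultimately show "successively R (a#b#r)" using 3(2) by simp
  qed
qed auto

lemma walk_path: "is_walk (path_V n) (path_E n) w \<longleftrightarrow> w \<noteq> [] \<and> set w \<subseteq> {..n} \<and> pw w"
proof -
  have "set w \<subseteq> {..n} \<Longrightarrow> successively (path_E n) w = pw w"
    by (rule successively_cong) (auto simp: path_E_def)
  then show ?thesis unfolding is_walk_def path_V_def succ_nth[symmetric]
    by (auto simp: atLeast0AtMost)
qed

lemma deg_path: "v \<le> n \<Longrightarrow> 2 \<le> n \<Longrightarrow>
   deg (path_V n) (path_E n) v = (if v = 0 \<or> v = n then 1 else 2)"
proof -
  assume a: "v \<le> n" "2 \<le> n"
  have "{u \<in> path_V n. path_E n v u} = {u. u \<le> n \<and> (u = Suc v \<or> v = Suc u)}"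
    using a by (auto simp: path_V_def path_E_def)
  also have "\<dots> = (if v = 0 then {1} else if v = n then {v - 1} else {v - 1, v + 1})"
    using a by auto
  finally show ?thesis using a by (simp add: deg_def)
qed



lemma odd_distinct: "odd (a::nat) \<Longrightarrow> odd b \<Longrightarrow> a \<noteq> b \<Longrightarrow> 4 \<le> a + b"
  by presburger

lemma block: "(\<forall>j. p \<le> j \<longrightarrow> j < p+L \<longrightarrow> odd (m j)) \<Longrightarrow>
  (\<forall>j. p \<le> j \<longrightarrow> j+2 < p+L \<longrightarrow> m j \<noteq> m (j+2)) \<Longrightarrow> 2*L \<le> sum m {p..<p+L} + (2::nat)"
proof (induction L arbitrary: p rule: less_induct)
  case (less L)
  show ?case
  proof (cases "L \<ge> 4")
    case True
    have s: "sum m {p..<p+L} = m p + m (p+1) + m (p+2) + m (p+3) + sum m {p+4..<(p+4)+(L-4)}"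
    proof -
      have "{p..<p+L} = {p..<p+4} \<union> {p+4..<(p+4)+(L-4)}" using True by auto
      then have "sum m {p..<p+L} = sum m {p..<p+4} + sum m {p+4..<(p+4)+(L-4)}"
        by (simp add: sum.union_disjoint ivl_disj_int)
      moreover have "sum m {p..<p+4} = m p + m (p+1) + m (p+2) + m (p+3)"
        by (simp add: numeral_eq_Suc add.commute)
      ultimately show ?thesis by simp
    qed
    have ih: "2*(L-4) \<le> sum m {p+4..<(p+4)+(L-4)} + 2"
      apply (rule less.IH) using True less.prems by auto
    have "4 \<le> m p + m (p+2)" apply (rule odd_distinct) using True less.prems by auto
    moreover have "4 \<le> m (p+1) + m (p+3)" apply (rule odd_distinct)
      using True less.prems(1)[rule_format, of "p+1"] less.prems(1)[rule_format, of "p+3"]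
        less.prems(2)[rule_format, of "p+1"] by (auto simp: numeral_eq_Suc)
    ultimately show ?thesis using s ih True by simp
  next
    case False
    then have "L = 0 \<or> L = 1 \<or> L = 2 \<or> L = 3" by auto
    moreover have "L = 3 \<Longrightarrow> 4 \<le> m p + m (p+2)" apply (rule odd_distinct) using less.prems by auto
    moreover have "0 < L \<Longrightarrow> odd (m p)" using less.prems by auto
    moreover have "1 < L \<Longrightarrow> odd (m (p+1))" using less.prems by auto
    ultimately show ?thesis
      by (auto simp: numeral_eq_Suc add.commute; presburger)
  qed
qed

lemma comb:
  fixes m :: "nat \<Rightarrow> nat"
  assumes A: "\<forall>j. 1 \<le> j \<longrightarrow> j+2 \<le> n \<longrightarrow> m j \<noteq> m (j+2)"
    and Z: "\<forall>i. 3 \<le> i \<longrightarrow> i+2 \<le> n \<longrightarrow> 0 < m i"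
    and P: "\<forall>i j k. 1 \<le> i \<longrightarrow> i \<le> j \<longrightarrow> j \<le> k \<longrightarrow> k \<le> n \<longrightarrow> odd (m i) \<longrightarrow> odd (m k) \<longrightarrow> odd (m j)"
  shows "2*n \<le> (\<Sum>i=1..n. m i) + 10"
proof -
  define g where "g i = (if 3 \<le> i \<and> i+2 \<le> n then 2 else (0::nat))" for i
  define Od where "Od = {i\<in>{1..n}. odd (m i)}"
  have fin: "finite Od" "Od \<subseteq> {1..n}" by (auto simp: Od_def)
  have gsum: "(\<Sum>i=1..n. g i) + 8 \<ge> 2*n"
  proof -
    have "(\<Sum>i=1..n. g i) = (\<Sum>i\<in>{i\<in>{1..n}. 3 \<le> i \<and> i+2 \<le> n}. 2)"
      unfolding g_def by (rule sum.inter_filter[symmetric]) simp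
    also have "{i\<in>{1..n}. 3 \<le> i \<and> i+2 \<le> n} = {3..n-2}" by auto
    finally show ?thesis by simp
  qed
  have Om: "2 * card Od \<le> sum m Od + 2"
  proof (cases "Od = {}")
    case False
    define p where "p = Min Od"
    define q where "q = Max Od"
    have pq: "p \<in> Od" "q \<in> Od" using False fin by (auto simp: p_def q_def)
    have Oeq: "Od = {p..<p+(q+1-p)}"
    proof
      show "Od \<subseteq> {p..<p+(q+1-p)}"
      proof
        fix x assume "x \<in> Od"
        then have "p \<le> x" "x \<le> q" using fin unfolding p_def q_def by (simp_all add: Min_le Max_ge)
        then show "x \<in> {p..<p+(q+1-p)}" by auto
      qed
      show "{p..<p+(q+1-p)} \<subseteq> Od"
      proof
        fix j assume j: "j \<in> {p..<p+(q+1-p)}"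
        then have "p \<le> j" "j \<le> q" by auto
        moreover have "1 \<le> p" "q \<le> n" "odd (m p)" "odd (m q)" using pq by (auto simp: Od_def)
        ultimately show "j \<in> Od" using P[rule_format, of p j q] unfolding Od_def by simp
      qed
    qed
    have "2*(q+1-p) \<le> sum m {p..<p+(q+1-p)} + 2"
    proof (rule block)
      show "\<forall>j. p \<le> j \<longrightarrow> j < p + (q + 1 - p) \<longrightarrow> odd (m j)"
      proof (intro allI impI)
        fix j assume "p \<le> j" "j < p + (q + 1 - p)"
        then have "j \<in> Od" using Oeq by simp
        then show "odd (m j)" by (simp add: Od_def)
      qed
      show "\<forall>j. p \<le> j \<longrightarrow> j + 2 < p + (q + 1 - p) \<longrightarrow> m j \<noteq> m (j + 2)"
      proof (intro allI impI)
        fix j assume "p \<le> j" "j + 2 < p + (q + 1 - p)"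
        moreover have "1 \<le> p" "q \<le> n" using pq by (auto simp: Od_def)
        ultimately show "m j \<noteq> m (j+2)" using A[rule_format, of j] by simp
      qed
    qed
    then show ?thesis using Oeq by simp
  qed simp
  have gO: "sum g Od \<le> 2 * card Od"
  proof -
    have "sum g Od \<le> of_nat (card Od) * 2" by (rule sum_bounded_above) (simp add: g_def)
    then show ?thesis by simp
  qed
  have rest: "sum g ({1..n} - Od) \<le> sum m ({1..n} - Od)"
  proof (rule sum_mono)
    fix i assume i: "i \<in> {1..n} - Od"
    then have "even (m i)" by (auto simp: Od_def)
    moreover have "3 \<le> i \<Longrightarrow> i+2 \<le> n \<Longrightarrow> 0 < m i" using Z[rule_format, of i] by simp
    ultimately show "g i \<le> m i" unfolding g_def by presburger
  qed
  have "sum m {1..n} = sum m ({1..n} - Od) + sum m Od"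
    using fin by (simp add: sum.subset_diff)
  moreover have "sum g {1..n} = sum g ({1..n} - Od) + sum g Od"
    using fin by (simp add: sum.subset_diff)
  ultimately show ?thesis using gsum Om gO rest by linarith
qed



definition base :: "nat \<Rightarrow> nat \<Rightarrow> nat" where
  "base n v = (if v = 0 \<or> v = n then 1 else 2)"

lemma irreg_iff:
  assumes n: "2 \<le> n" and w: "w \<noteq> []" "set w \<subseteq> {..n}" "pw w"
  shows "irregularising (path_V n) (path_E n) w \<longleftrightarrow>
    (\<forall>v<n. base n v + tr w v + tr w (Suc v) \<noteq> base n (Suc v) + tr w (Suc v) + tr w (Suc (Suc v)))"
proof -
  have wk: "is_walk (path_V n) (path_E n) w" using w walk_path by blast
  have dp: "deg_plus (path_V n) (path_E n) w v = base n v + tr w v + tr w (Suc v)" if "v \<le> n" for v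
    using that n w(3) by (simp add: deg_plus_def deg_path base_def walk_inc_eq inc_tr)
  show ?thesis
  proof
    assume H: "irregularising (path_V n) (path_E n) w"
    show "\<forall>v<n. base n v + tr w v + tr w (Suc v) \<noteq> base n (Suc v) + tr w (Suc v) + tr w (Suc (Suc v))"
    proof (intro allI impI)
      fix v assume "v < n"
      then have "v \<in> path_V n" "Suc v \<in> path_V n" "path_E n v (Suc v)" by (auto simp: path_V_def path_E_def)
      then have "deg_plus (path_V n) (path_E n) w v \<noteq> deg_plus (path_V n) (path_E n) w (Suc v)"
        using H unfolding irregularising_def by blast
      then show "base n v + tr w v + tr w (Suc v) \<noteq> base n (Suc v) + tr w (Suc v) + tr w (Suc (Suc v))"
        using dp \<open>v < n\<close> by simp
    qed
  next
    assume H: "\<forall>v<n. base n v + tr w v + tr w (Suc v) \<noteq> base n (Suc v) + tr w (Suc v) + tr w (Suc (Suc v))"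
    show "irregularising (path_V n) (path_E n) w"
      unfolding irregularising_def
    proof (intro conjI wk ballI impI)
      fix u v assume uv: "u \<in> path_V n" "v \<in> path_V n" "path_E n u v"
      then have "v = Suc u \<or> u = Suc v" "u \<le> n" "v \<le> n" by (auto simp: path_E_def path_V_def)
      then show "deg_plus (path_V n) (path_E n) w u \<noteq> deg_plus (path_V n) (path_E n) w v"
        using H dp by (metis Suc_le_eq)
    qed
  qed
qed

fun W :: "nat \<Rightarrow> nat \<Rightarrow> nat list" where
  "W s 0 = [s, s+1, s+2]"
| "W s (Suc k) = W s k @ [s+4*k+3, s+4*k+4, s+4*k+3, s+4*k+2, s+4*k+3, s+4*k+4, s+4*k+5, s+4*k+6]"

definition M :: "nat \<Rightarrow> nat \<Rightarrow> nat \<Rightarrow> nat" where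
  "M s k i = (if s < i \<and> i \<le> s+2 then 1 else if s+2 < i \<and> i \<le> s+2+4*k then
     (if (i-s-3) mod 4 < 2 then 3 else 1) else 0)"

lemma W_ne[simp]: "W s k \<noteq> []" by (induction k) auto
lemma W_last[simp]: "last (W s k) = s+2+4*k" by (induction k) auto
lemma W_hd[simp]: "hd (W s k) = s" by (induction k) auto
lemma W_len[simp]: "length (W s k) = 3 + 8*k" by (induction k) auto
lemma W_set: "set (W s k) \<subseteq> {s..s+2+4*k}" by (induction k) auto
lemma W_pw: "pw (W s k)"
  by (induction k) (auto simp: successively_append_iff)

lemma h4: "a < 4 \<Longrightarrow> (a + 4*k) mod 4 = (a::nat)" by arith

lemma M_Suc: "M s (Suc k) i = M s k i + (if i = s+4*k+3 \<or> i = s+4*k+4 then 3 else if i = s+4*k+5 \<or> i = s+4*k+6 then 1 else 0)"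
proof -
  consider "i \<le> s+2+4*k" | "i = s+4*k+3" | "i = s+4*k+4" | "i = s+4*k+5" | "i = s+4*k+6" | "i > s+4*k+6"
    by linarith
  then show ?thesis
  proof cases
    case 1 then show ?thesis by (auto simp: M_def)
  next
    case 2
    have "i-s-3 = 0 + 4*k" using 2 by simp
    then have "(i-s-3) mod 4 = 0" using h4[of 0 k] by (simp only:)
    then show ?thesis using 2 by (simp add: M_def)
  next
    case 3
    have "i-s-3 = 1 + 4*k" using 3 by simp
    then have "(i-s-3) mod 4 = 1" using h4[of 1 k] by (simp only:)
    then show ?thesis using 3 by (simp add: M_def)
  next
    case 4
    have "i-s-3 = 2 + 4*k" using 4 by simp
    then have "(i-s-3) mod 4 = 2" using h4[of 2 k] by (simp only:)
    then show ?thesis using 4 by (simp add: M_def)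
  next
    case 5
    have "i-s-3 = 3 + 4*k" using 5 by simp
    then have "(i-s-3) mod 4 = 3" using h4[of 3 k] by (simp only:)
    then show ?thesis using 5 by (simp add: M_def)
  next
    case 6 then show ?thesis by (auto simp: M_def)
  qed
qed

lemma W_tr: "tr (W s k) i = M s k i"
proof (induction k)
  case 0
  then show ?case by (auto simp: M_def)
next
  case (Suc k)
  have "tr (W s (Suc k)) i = M s k i + tr [s+4*k+2, s+4*k+3, s+4*k+4, s+4*k+3, s+4*k+2, s+4*k+3, s+4*k+4, s+4*k+5, s+4*k+6] i"
    using Suc by (simp add: tr_append)
  also have "tr [s+4*k+2, s+4*k+3, s+4*k+4, s+4*k+3, s+4*k+2, s+4*k+3, s+4*k+4, s+4*k+5, s+4*k+6] i
     = (if i = s+4*k+3 \<or> i = s+4*k+4 then 3 else if i = s+4*k+5 \<or> i = s+4*k+6 then 1 else 0)"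
    by auto
  finally show ?case by (simp add: M_Suc)
qed



lemma alt4: "((x+2) mod 4 < 2) = (\<not> (x mod 4 < (2::nat)))" by arith

lemma M_lo: "v \<le> s \<Longrightarrow> M s k v = 0" by (simp add: M_def)
lemma M_hi: "s+2+4*k < v \<Longrightarrow> M s k v = 0" by (simp add: M_def)
lemma M_a: "v = s+1 \<or> v = s+2 \<Longrightarrow> M s k v = 1" by (auto simp: M_def)
lemma M_b: "v = s+1+4*k \<or> v = s+2+4*k \<Longrightarrow> M s k v = 1"
proof -
  assume v: "v = s+1+4*k \<or> v = s+2+4*k"
  show ?thesis
  proof (cases k)
    case 0 then show ?thesis using v M_a by auto
  next
    case (Suc j)
    then have "v-s-3 = 2 + 4*j \<or> v-s-3 = 3 + 4*j" using v by auto
    then have "(v-s-3) mod 4 = 2 \<or> (v-s-3) mod 4 = 3" using h4[of 2 j] h4[of 3 j] by auto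
    then show ?thesis using v Suc unfolding M_def by auto
  qed
qed

lemma M_alt: "s+1 \<le> v \<Longrightarrow> v+2 \<le> s+2+4*k \<Longrightarrow> M s k v \<noteq> M s k (v+2)"
proof -
  assume a: "s+1 \<le> v" "v+2 \<le> s+2+4*k"
  show ?thesis
  proof (cases "v \<le> s+2")
    case True
    then have "v = s+1 \<or> v = s+2" using a by auto
    then have "M s k v = 1" by (rule M_a)
    moreover have "v+2-s-3 = 0 \<or> v+2-s-3 = 1" using True a by auto
    then have "M s k (v+2) = 3" using a True unfolding M_def by auto
    ultimately show ?thesis by simp
  next
    case False
    define x where "x = v-s-3"
    have "v+2-s-3 = x+2" using False by (simp add: x_def)
    then have "M s k (v+2) = (if (x+2) mod 4 < 2 then 3 else 1)" "M s k v = (if x mod 4 < 2 then 3 else 1)"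
      using a False unfolding M_def x_def by auto
    then show ?thesis using alt4[of x] by auto
  qed
qed

lemma base_mid: "1 \<le> v \<Longrightarrow> v < n \<Longrightarrow> base n v = 2" by (simp add: base_def)

lemma F2_ok: "n = 6+4*k \<Longrightarrow> v < n \<Longrightarrow> base n v + M 2 k v \<noteq> base n (v+1) + M 2 k (v+2)"
proof -
  assume n: "n = 6+4*k" and v: "v < n"
  consider "v = 0" | "v = 1" | "v = 2" | "3 \<le> v \<and> v+2 \<le> 4+4*k" | "v = 3+4*k" | "v = 4+4*k" | "v = 5+4*k"
    using n v by linarith
  then show ?thesis
  proof cases
    case 1
    have "M 2 k v = 0" "M 2 k (v+2) = 0" by (rule M_lo, use 1 in simp)+
    then show ?thesis using 1 n unfolding base_def by auto
  next
    case 2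
    have "M 2 k v = 0" by (rule M_lo, use 2 in simp)
    moreover have "M 2 k (v+2) = 1" by (rule M_a, use 2 in simp)
    ultimately show ?thesis using 2 n unfolding base_def by auto
  next
    case 3
    have "M 2 k v = 0" by (rule M_lo, use 3 in simp)
    moreover have "M 2 k (v+2) = 1" by (rule M_a, use 3 in simp)
    ultimately show ?thesis using 3 n unfolding base_def by auto
  next
    case 4 then show ?thesis using n M_alt[of 2 v k] base_mid[of v n] base_mid[of "v+1" n] by simp
  next
    case 5 then show ?thesis using n M_b[of v 2 k] M_hi[of 2 k "v+2"] base_mid[of v n] base_mid[of "v+1" n] by simp
  next
    case 6 then show ?thesis using n M_b[of v 2 k] M_hi[of 2 k "v+2"] base_mid[of v n] base_mid[of "v+1" n] by simp
  next
    case 7 then show ?thesis using n M_hi[of 2 k v] M_hi[of 2 k "v+2"] by (simp add: base_def)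
  qed
qed



lemma fam:
  assumes "2 \<le> n" "w \<noteq> []" "set w \<subseteq> {..n}" "pw w" "\<And>i. tr w i = T i"
    "\<And>v. v < n \<Longrightarrow> base n v + T v \<noteq> base n (v+1) + T (v+2)"
  shows "irregularising (path_V n) (path_E n) w"
proof -
  have "\<forall>v<n. base n v + tr w v + tr w (Suc v) \<noteq> base n (Suc v) + tr w (Suc v) + tr w (Suc (Suc v))"
    using assms(5,6) by simp
  then show ?thesis using irreg_iff assms(1-4) by blast
qed

lemma tr_Cons: "w \<noteq> [] \<Longrightarrow> tr (a # w) i = (if (a = i \<and> Suc (hd w) = i) \<or> (hd w = i \<and> Suc a = i) then 1 else 0) + tr w i"
  by (cases w) auto

definition T3 where "T3 k i = M 2 k i + (if i = 5+4*k then 2 else 0)"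
definition T0 where "T0 k i = M 2 k i + (if i = 5+4*k \<or> i = 6+4*k then 2 else 0)"
definition T1 where "T1 k i = M 3 k i + (if i = 3 then 2 else 0) + (if i = 6+4*k \<or> i = 7+4*k then 2 else 0)"

lemma F3_tr: "tr (W 2 k @ [5+4*k, 4+4*k]) i = T3 k i"
  by (simp add: tr_append W_tr T3_def)

lemma F0_tr: "tr (W 2 k @ [5+4*k, 6+4*k, 5+4*k, 4+4*k]) i = T0 k i"
  by (auto simp add: tr_append W_tr T0_def)

lemma W_Cons: "\<exists>r. W s k = s # r" 
  using W_ne W_hd by (metis list.collapse)

lemma F1_tr: "tr (3 # 2 # (W 3 k @ [6+4*k, 7+4*k, 6+4*k, 5+4*k])) i = T1 k i"
proof -
  have "tr (2 # (W 3 k @ [6+4*k, 7+4*k, 6+4*k, 5+4*k])) i = (if i = 3 then 1 else 0) + tr (W 3 k @ [6+4*k, 7+4*k, 6+4*k, 5+4*k]) i"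
    by (subst tr_Cons) auto
  then show ?thesis by (auto simp add: tr_append W_tr T1_def)
qed



lemma F3_ok: "n = 7+4*k \<Longrightarrow> v < n \<Longrightarrow> base n v + T3 k v \<noteq> base n (v+1) + T3 k (v+2)"
proof -
  assume n: "n = 7+4*k" and v: "v < n"
  consider "v \<le> 2" | "3 \<le> v \<and> v+2 \<le> 4+4*k" | "v = 3+4*k" | "v = 4+4*k" | "v = 5+4*k" | "v = 6+4*k"
    using n v by linarith
  then show ?thesis
  proof cases
    case 1
    have "M 2 k v = 0" by (rule M_lo, use 1 in simp)
    moreover have "v = 0 \<Longrightarrow> M 2 k (v+2) = 0" by (rule M_lo) simp
    moreover have "v \<noteq> 0 \<Longrightarrow> M 2 k (v+2) = 1" by (rule M_a, use 1 in auto)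
    ultimately show ?thesis using 1 n unfolding base_def T3_def by auto
  next
    case 2 then show ?thesis using n M_alt[of 2 v k] base_mid[of v n] base_mid[of "v+1" n] by (simp add: T3_def)
  next
    case 3
    have "M 2 k v = 1" by (rule M_b, use 3 in simp)
    moreover have "M 2 k (v+2) = 0" by (rule M_hi, use 3 in simp)
    ultimately show ?thesis using 3 n unfolding base_def T3_def by auto
  next
    case 4
    have "M 2 k v = 1" by (rule M_b, use 4 in simp)
    moreover have "M 2 k (v+2) = 0" by (rule M_hi, use 4 in simp)
    ultimately show ?thesis using 4 n unfolding base_def T3_def by auto
  next
    case 5
    have "M 2 k v = 0" "M 2 k (v+2) = 0" by (rule M_hi, use 5 in simp)+
    then show ?thesis using 5 n unfolding base_def T3_def by auto
  next
    case 6
    have "M 2 k v = 0" "M 2 k (v+2) = 0" by (rule M_hi, use 6 in simp)+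
    then show ?thesis using 6 n unfolding base_def T3_def by auto
  qed
qed

lemma F0_ok: "n = 8+4*k \<Longrightarrow> v < n \<Longrightarrow> base n v + T0 k v \<noteq> base n (v+1) + T0 k (v+2)"
proof -
  assume n: "n = 8+4*k" and v: "v < n"
  consider "v \<le> 2" | "3 \<le> v \<and> v+2 \<le> 4+4*k" | "v = 3+4*k" | "v = 4+4*k" | "v \<ge> 5+4*k"
    using n v by linarith
  then show ?thesis
  proof cases
    case 1
    have "M 2 k v = 0" by (rule M_lo, use 1 in simp)
    moreover have "v = 0 \<Longrightarrow> M 2 k (v+2) = 0" by (rule M_lo) simp
    moreover have "v \<noteq> 0 \<Longrightarrow> M 2 k (v+2) = 1" by (rule M_a, use 1 in auto)
    ultimately show ?thesis using 1 n unfolding base_def T0_def by auto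
  next
    case 2 then show ?thesis using n M_alt[of 2 v k] base_mid[of v n] base_mid[of "v+1" n] by (simp add: T0_def)
  next
    case 3
    have "M 2 k v = 1" by (rule M_b, use 3 in simp)
    moreover have "M 2 k (v+2) = 0" by (rule M_hi, use 3 in simp)
    ultimately show ?thesis using 3 n unfolding base_def T0_def by auto
  next
    case 4
    have "M 2 k v = 1" by (rule M_b, use 4 in simp)
    moreover have "M 2 k (v+2) = 0" by (rule M_hi, use 4 in simp)
    ultimately show ?thesis using 4 n unfolding base_def T0_def by auto
  next
    case 5
    have "M 2 k v = 0" "M 2 k (v+2) = 0" by (rule M_hi, use 5 in simp)+
    then show ?thesis using 5 n v unfolding base_def T0_def by auto
  qed
qed

lemma F1_ok: "n = 9+4*k \<Longrightarrow> v < n \<Longrightarrow> base n v + T1 k v \<noteq> base n (v+1) + T1 k (v+2)"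
proof -
  assume n: "n = 9+4*k" and v: "v < n"
  consider "v \<le> 3" | "4 \<le> v \<and> v+2 \<le> 5+4*k" | "v = 4+4*k" | "v = 5+4*k" | "v \<ge> 6+4*k"
    using n v by linarith
  then show ?thesis
  proof cases
    case 1
    have "M 3 k v = 0" by (rule M_lo, use 1 in simp)
    moreover have "v \<le> 1 \<Longrightarrow> M 3 k (v+2) = 0" by (rule M_lo) simp
    moreover have "v \<ge> 2 \<Longrightarrow> M 3 k (v+2) = 1" by (rule M_a, use 1 in auto)
    ultimately show ?thesis using 1 n unfolding base_def T1_def by auto
  next
    case 2 then show ?thesis using n M_alt[of 3 v k] base_mid[of v n] base_mid[of "v+1" n] by (simp add: T1_def)
  next
    case 3
    have "M 3 k v = 1" by (rule M_b, use 3 in simp)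
    moreover have "M 3 k (v+2) = 0" by (rule M_hi, use 3 in simp)
    ultimately show ?thesis using 3 n unfolding base_def T1_def by auto
  next
    case 4
    have "M 3 k v = 1" by (rule M_b, use 4 in simp)
    moreover have "M 3 k (v+2) = 0" by (rule M_hi, use 4 in simp)
    ultimately show ?thesis using 4 n unfolding base_def T1_def by auto
  next
    case 5
    have "M 3 k v = 0" "M 3 k (v+2) = 0" by (rule M_hi, use 5 in simp)+
    then show ?thesis using 5 n v unfolding base_def T1_def by auto
  qed
qed



lemma change: "a < b \<Longrightarrow> odd (m a) \<noteq> odd (m b) \<Longrightarrow> \<exists>v. a \<le> v \<and> v < b \<and> odd (m v + m (Suc v))"
proof (induction b)
  case 0 then show ?case by simp
next
  case (Suc b)
  show ?case
  proof (cases "odd (m a) = odd (m b) \<and> a < b")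
    case True
    then have "odd (m (b + 1)) \<noteq> odd (m b)" using Suc.prems by simp
    then have "odd (m b + m (Suc b))" by simp
    then show ?thesis using True by (intro exI[of _ b]) auto
  next
    case False
    then show ?thesis
    proof (cases "a < b")
      case True
      then obtain v where "a \<le> v \<and> v < b \<and> odd (m v + m (Suc v))" using Suc False by blast
      then show ?thesis by (intro exI[of _ v]) auto
    next
      case False
      then have "a = b" using Suc.prems by simp
      then show ?thesis using Suc.prems by (intro exI[of _ b]) auto
    qed
  qed
qed

lemma lower:
  assumes n: "2 \<le> n" and ir: "irregularising (path_V n) (path_E n) w"
  shows "(if n = 2 then 0 else if n = 3 then 1 else if n \<in> {4, 5} then 2 else 2 * n - 10) \<le> walk_length w"
proof -
  have wk: "w \<noteq> []" "set w \<subseteq> {..n}" "pw w"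
    using ir walk_path unfolding irregularising_def by blast+
  define m where "m = tr w"
  have C: "\<forall>v<n. base n v + m v + m (Suc v) \<noteq> base n (Suc v) + m (Suc v) + m (Suc (Suc v))"
    using irreg_iff[OF n wk] ir unfolding m_def by blast
  have A: "\<forall>j. 1 \<le> j \<longrightarrow> j+2 \<le> n \<longrightarrow> m j \<noteq> m (j+2)"
  proof (intro allI impI)
    fix j assume j: "1 \<le> j" "j+2 \<le> n"
    have "base n j = 2" "base n (Suc j) = 2" using j by (auto simp: base_def)
    moreover have "base n j + m j + m (Suc j) \<noteq> base n (Suc j) + m (Suc j) + m (Suc (Suc j))"
      using C j by simp
    ultimately show "m j \<noteq> m (j+2)" by simp
  qed
  have len: "walk_length w = (\<Sum>i=1..n. m i)"
    using tr_sum[OF wk(3) wk(2)] unfolding walk_length_def m_def by simp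
  have m0: "m 0 = 0" by (simp add: m_def)
  show ?thesis
  proof (cases "n \<le> 5")
    case True
    have "n = 2 \<or> n = 3 \<or> n = 4 \<or> n = 5" using True n by auto
    moreover have "n = 3 \<Longrightarrow> 1 \<le> (\<Sum>i=1..n. m i)"
    proof -
      assume n3: "n = 3"
      have "m 1 \<noteq> m 3" using A[rule_format, of 1] n3 by (simp add: numeral_eq_Suc)
      then have "1 \<le> m 1 + m 3" by linarith
      also have "m 1 + m 3 \<le> (\<Sum>i\<in>{1..n}. m i)" using n3 by (simp add: numeral_eq_Suc)
      finally show ?thesis .
    qed
    moreover have "4 \<le> n \<Longrightarrow> 2 \<le> (\<Sum>i=1..n. m i)"
    proof -
      assume n4: "4 \<le> n"
      have "m 1 \<noteq> m 3" "m 2 \<noteq> m 4" using A[rule_format, of 1] A[rule_format, of 2] n4 by (simp_all add: numeral_eq_Suc)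
      then have "2 \<le> m 1 + m 2 + m 3 + m 4" by linarith
      also have "m 1 + m 2 + m 3 + m 4 = (\<Sum>i\<in>{1,2,3,4}. m i)" by simp
      also have "\<dots> \<le> (\<Sum>i\<in>{1..n}. m i)" by (rule sum_mono2) (use n4 in auto)
      finally show ?thesis .
    qed
    ultimately show ?thesis using len by auto
  next
    case False
    have Z: "\<forall>i. 3 \<le> i \<longrightarrow> i+2 \<le> n \<longrightarrow> 0 < m i"
    proof (intro allI impI)
      fix i assume i: "3 \<le> i" "i+2 \<le> n"
      show "0 < m i"
      proof (rule ccontr)
        assume "\<not> 0 < m i"
        then have "tr w i = 0" by (simp add: m_def)
        from tr_conn[OF wk(3) this] i
        have "(\<forall>x\<in>set w. x < i) \<or> (\<forall>x\<in>set w. i \<le> x)" by simp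
        then show False
        proof
          assume "\<forall>x\<in>set w. x < i"
          then have "m (i+2) = 0" unfolding m_def by (rule tr_below) simp
          moreover have "m i \<noteq> m (i+2)" using A[rule_format, of i] i by simp
          ultimately show False using \<open>tr w i = 0\<close> m_def by simp
        next
          assume "\<forall>x\<in>set w. i \<le> x"
          then have "m (i-2) = 0" unfolding m_def by (rule tr_above) simp
          moreover have "m (i-2) \<noteq> m (i-2+2)" using A[rule_format, of "i-2"] i by simp
          moreover have "i-2+2 = i" using i by simp
          ultimately show False using \<open>tr w i = 0\<close> m_def by simp
        qed
      qed
    qed
    have odd_hl: "odd (m v + m (Suc v)) \<Longrightarrow> v = hd w \<or> v = last w" for v
      using inc_odd[OF wk(3) wk(1), of v] inc_tr[OF wk(3), of v] unfolding m_def by simp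
    have P: "\<forall>i j k. 1 \<le> i \<longrightarrow> i \<le> j \<longrightarrow> j \<le> k \<longrightarrow> k \<le> n \<longrightarrow> odd (m i) \<longrightarrow> odd (m k) \<longrightarrow> odd (m j)"
    proof (intro allI impI, rule ccontr)
      fix i j k assume h: "1 \<le> i" "i \<le> j" "j \<le> k" "k \<le> n" "odd (m i)" "odd (m k)" "\<not> odd (m j)"
      have ij: "i < j" "j < k" using h by (metis le_neq_implies_less)+
      obtain v1 where v1: "0 \<le> v1 \<and> v1 < i \<and> odd (m v1 + m (Suc v1))"
        using change[of 0 i m] h m0 by auto
      obtain v2 where v2: "i \<le> v2 \<and> v2 < j \<and> odd (m v2 + m (Suc v2))"
        using change[of i j m] h ij by auto
      obtain v3 where v3: "j \<le> v3 \<and> v3 < k \<and> odd (m v3 + m (Suc v3))"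
        using change[of j k m] h ij by auto
      have "v1 = hd w \<or> v1 = last w" "v2 = hd w \<or> v2 = last w" "v3 = hd w \<or> v3 = last w"
        using odd_hl v1 v2 v3 by blast+
      moreover have "v1 < v2" "v2 < v3" using v1 v2 v3 by linarith+
      ultimately show False by (metis less_not_refl order_less_trans)
    qed
    have "2*n \<le> (\<Sum>i=1..n. m i) + 10" by (rule comb[OF A Z P])
    then show ?thesis using False len by auto
  qed
qed



lemma small_irreg:
  assumes "2 \<le> n" "w \<noteq> []" "set w \<subseteq> {..n}" "pw w"
    "\<And>v. v < n \<Longrightarrow> base n v + tr w v \<noteq> base n (v+1) + tr w (v+2)"
  shows "irregularising (path_V n) (path_E n) w"
  by (rule fam[OF assms(1-4), of "tr w"]) (use assms(5) in auto)

lemma lt_cases: "v < (6::nat) \<Longrightarrow> v = 0 \<or> v = 1 \<or> v = 2 \<or> v = 3 \<or> v = 4 \<or> v = 5" by auto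

lemma upper:
  assumes n: "2 \<le> n"
  shows "\<exists>w. irregularising (path_V n) (path_E n) w \<and>
     walk_length w = (if n = 2 then 0 else if n = 3 then 1 else if n \<in> {4, 5} then 2 else 2 * n - 10)"
proof -
  consider "n = 2" | "n = 3" | "n = 4" | "n = 5" | "6 \<le> n" using n by linarith
  then show ?thesis
  proof cases
    case 1
    have "irregularising (path_V n) (path_E n) [0]"
      by (rule small_irreg) (use 1 lt_cases in \<open>auto simp: base_def\<close>)
    then show ?thesis using 1 by (intro exI[of _ "[0]"]) (simp add: walk_length_def)
  next
    case 2
    have "irregularising (path_V n) (path_E n) [2,3]"
      by (rule small_irreg) (use 2 lt_cases in \<open>auto simp: base_def\<close>)
    then show ?thesis using 2 by (intro exI[of _ "[2,3]"]) (simp add: walk_length_def)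
  next
    case 3
    have "irregularising (path_V n) (path_E n) [2,3,4]"
      by (rule small_irreg) (use 3 lt_cases in \<open>auto simp: base_def\<close>)
    then show ?thesis using 3 by (intro exI[of _ "[2,3,4]"]) (simp add: walk_length_def)
  next
    case 4
    have "irregularising (path_V n) (path_E n) [2,3,4]"
      by (rule small_irreg) (use 4 lt_cases in \<open>auto simp: base_def\<close>)
    then show ?thesis using 4 by (intro exI[of _ "[2,3,4]"]) (simp add: walk_length_def)
  next
    case 5
    define k where "k = (n - 6) div 4"
    have "n mod 4 = 2 \<or> n mod 4 = 3 \<or> n mod 4 = 0 \<or> n mod 4 = 1" by arith
    then have "n = 6+4*k \<or> n = 7+4*k \<or> n = 8+4*k \<or> n = 9+4*k" using 5 unfolding k_def by arith
    then consider "n = 6+4*k" | "n = 7+4*k" | "n = 8+4*k" | "n = 9+4*k" by blast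
    then show ?thesis
    proof cases
      case 1
      have "irregularising (path_V n) (path_E n) (W 2 k)"
      proof (rule fam[of n _ "M 2 k"])
        show "set (W 2 k) \<subseteq> {..n}" using W_set[of 2 k] 1 by auto
      qed (use 1 W_pw W_tr F2_ok in auto)
      moreover have "walk_length (W 2 k) = 2*n-10" using 1 by (simp add: walk_length_def)
      ultimately show ?thesis using 5 by (intro exI[of _ "W 2 k"]) simp
    next
      case 2
      let ?w = "W 2 k @ [5+4*k, 4+4*k]"
      have "irregularising (path_V n) (path_E n) ?w"
      proof (rule fam[of n _ "T3 k"])
        show "set ?w \<subseteq> {..n}" using W_set[of 2 k] 2 by auto
        show "pw ?w" using W_pw[of 2 k] by (simp add: successively_append_iff)
      qed (use 2 F3_tr F3_ok in auto)
      moreover have "walk_length ?w = 2*n-10" using 2 by (simp add: walk_length_def)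
      ultimately show ?thesis using 5 by (intro exI[of _ ?w]) simp
    next
      case 3
      let ?w = "W 2 k @ [5+4*k, 6+4*k, 5+4*k, 4+4*k]"
      have "irregularising (path_V n) (path_E n) ?w"
      proof (rule fam[of n _ "T0 k"])
        show "set ?w \<subseteq> {..n}" using W_set[of 2 k] 3 by auto
        show "pw ?w" using W_pw[of 2 k] by (simp add: successively_append_iff)
      qed (use 3 F0_tr F0_ok in auto)
      moreover have "walk_length ?w = 2*n-10" using 3 by (simp add: walk_length_def)
      ultimately show ?thesis using 5 by (intro exI[of _ ?w]) simp
    next
      case 4
      let ?w = "3 # 2 # (W 3 k @ [6+4*k, 7+4*k, 6+4*k, 5+4*k])"
      have "irregularising (path_V n) (path_E n) ?w"
      proof (rule fam[of n _ "T1 k"])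
        show "set ?w \<subseteq> {..n}" using W_set[of 3 k] 4 by auto
        show "pw ?w" using W_pw[of 3 k] by (simp add: successively_append_iff successively_Cons)
      qed (use 4 F1_tr F1_ok in auto)
      moreover have "walk_length ?w = 2*n-10" using 4 by (simp add: walk_length_def)
      ultimately show ?thesis using 5 by (intro exI[of _ ?w]) simp
    qed
  qed
qed

theorem theorem5p5:
  fixes n :: nat
  assumes "n \<ge> 2"
  shows "min_irreg_walk_length (path_V n) (path_E n) =
           (if n = 2 then 0 else if n = 3 then 1 else if n \<in> {4, 5} then 2 else 2 * n - 10)"
  unfolding min_irreg_walk_length_def
proof (rule Least_equality)
  show "\<exists>w. irregularising (path_V n) (path_E n) w \<and>
     walk_length w = (if n = 2 then 0 else if n = 3 then 1 else if n \<in> {4, 5} then 2 else 2 * n - 10)"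
    using upper[OF assms] by blast
next
  fix p assume "\<exists>w. irregularising (path_V n) (path_E n) w \<and> walk_length w = p"
  then show "(if n = 2 then 0 else if n = 3 then 1 else if n \<in> {4, 5} then 2 else 2 * n - 10) \<le> p"
    using lower[OF assms] by blast
qed

end
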